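(* For all integers $n\ge 2$, $0\le r\le n$ and $0\le k\le n-2$, $$N_k^{n,r}=\frac{2(k+1)}{n-k-1}\sum_{i}\binom{k}{i}\binom{n-k+i-1}{r}\binom{n-i-1}{n-r},$$ where the sum runs over all integers $i$ with $0\le i\le k$.
   Context: A lattice path from $(0,0)$ to $(r,n-r)$ (with integers $n\ge 1$, $0\le r\le n$) is a sequence of lattice points $v_0=(0,0),v_1,\dots,v_n=(r,n-r)$ with each step $v_i-v_{i-1}\in\{(1,0),(0,1)\}$ (an E step or an N step); its vertex set is $\{v_0,\dots,v_n\}$. For $k\ge 0$, $N_k^{n,r}$ denotes the number of ordered pairs $(P,Q)$ of lattice paths from $(0,0)$ to $(r,n-r)$ such that the intersection of their vertex sets, with the two points $(0,0)$ and $(r,n-r)$ removed, has exactly $k$ elements. Binomial coefficients $\binom{a}{b}$ with $a\ge 0$ are $0$ if $b<0$ or $b>a$. *)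

theory Defs
  imports Complex_Main
begin

text \<open>A lattice path with n steps is encoded as a list of steps, True = E step (1,0),
  False = N step (0,1). It ends at (r, n-r) iff it has length n and exactly r E steps.\<close>

definition lattice_paths :: "nat \<Rightarrow> nat \<Rightarrow> bool list set" where
  "lattice_paths n r = {p. length p = n \<and> length (filter id p) = r}"

definition path_vertex :: "bool list \<Rightarrow> nat \<Rightarrow> nat \<times> nat" where
  "path_vertex p i = (length (filter id (take i p)), length (filter Not (take i p)))"

definition path_vertices :: "bool list \<Rightarrow> (nat \<times> nat) set" where
  "path_vertices p = {path_vertex p i | i. i \<le> length p}"

definition N_count :: "nat \<Rightarrow> nat \<Rightarrow> nat \<Rightarrow> nat" where
  "N_count k n r = card {(P, Q). P \<in> lattice_paths n r \<and> Q \<in> lattice_paths n r \<and>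
      card (path_vertices P \<inter> path_vertices Q - {(0, 0), (r, n - r)}) = k}"

end

theory Submission
  imports Defs
begin


definition Bn :: "int \<Rightarrow> int \<Rightarrow> real" where
  "Bn a m = (if m < 0 then 0 else (of_int a :: real) gchoose (nat m))"

lemma Bn_neg: "m < 0 \<Longrightarrow> Bn a m = 0" by (simp add: Bn_def)

lemma Bn_pascal: "Bn (a+1) m = Bn a m + Bn a (m-1)"
proof (cases "m \<le> 0")
  case True
  then show ?thesis by (cases "m = 0") (auto simp: Bn_def)
next
  case False
  then obtain k where k: "m = int (Suc k)" by (metis gr0_implies_Suc not_le pos_int_cases)
  have "(of_int (a+1)::real) gchoose Suc k = ((of_int a::real) gchoose k) + ((of_int a::real) gchoose Suc k)"
    using gbinomial_Suc_Suc[of "of_int a :: real" k] by simp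
  moreover have "nat m = Suc k" "nat (m - 1) = k" using k by auto
  ultimately show ?thesis using k by (simp add: Bn_def)
qed

lemma Bn_absorb: "Bn a m * of_int m = Bn a (m-1) * (of_int a - of_int m + 1)"
proof (cases "m \<le> 0")
  case True
  then show ?thesis by (cases "m = 0") (auto simp: Bn_def)
next
  case False
  then obtain k where k: "m = int (Suc k)" by (metis gr0_implies_Suc not_le pos_int_cases)
  have "(of_int a::real) * (of_int a gchoose k) = (of_nat k::real) * (of_int a gchoose k) + (of_nat (Suc k)::real) * (of_int a gchoose (Suc k))"
    by (rule gbinomial_mult_1)
  moreover have "nat m = Suc k" "nat (m - 1) = k" using k by auto
  ultimately show ?thesis using k by (simp add: Bn_def algebra_simps)
qed

lemma Bn_nat: "Bn (int a) (int m) = real (a choose m)"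
  by (simp add: Bn_def binomial_gbinomial)

lemma Bn_sym: "Bn (int a) m = Bn (int a) (int a - m)"
proof -
  consider "m < 0" | "m > int a" | "0 \<le> m \<and> m \<le> int a" by linarith
  then show ?thesis
  proof cases
    case 1
    then have "Bn (int a) (int a - m) = real (a choose nat (int a - m))"
      using Bn_nat[of a "nat (int a - m)"] by simp
    also have "\<dots> = 0" using 1 by (simp add: binomial_eq_0)
    finally show ?thesis using 1 by (simp add: Bn_def)
  next
    case 2
    then have "Bn (int a) m = real (a choose nat m)"
      using Bn_nat[of a "nat m"] by simp
    also have "\<dots> = 0" using 2 by (simp add: binomial_eq_0)
    finally show ?thesis using 2 by (simp add: Bn_def)
  next
    case 3
    then obtain q where q: "m = int q" "q \<le> a" by (metis nat_0_le of_nat_le_iff int_nat_eq)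
    have "Bn (int a) (int a - m) = real (a choose (a-q))" using Bn_nat[of a "a-q"] q by (simp add: of_nat_diff)
    then show ?thesis using q by (simp add: Bn_nat binomial_symmetric[symmetric])
  qed
qed

definition G :: "int \<Rightarrow> int \<Rightarrow> int \<Rightarrow> int \<Rightarrow> real" where
  "G a u b v = Bn a u * Bn b v - Bn a (u-1) * Bn b (v-1)"

lemma G_pascal: "G (a+1) u (b+1) v = G a (u-1) b v + G a u b (v-1) + G a u b v + G a (u-1) b (v-1)"
  unfolding G_def Bn_pascal by (simp add: algebra_simps)

lemma G_contact: "G (p+1) u q v + G p (u-1) (q+1) (v+1) - G (p+1) u (q+1) (v+1) = G p (u-1) q v - G p u q (v+1)"
  unfolding G_def Bn_pascal by (simp add: algebra_simps)

definition g :: "int \<Rightarrow> int \<Rightarrow> int \<Rightarrow> int \<Rightarrow> int \<Rightarrow> real" where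
  "g t e1 e2 i j = G (t-1-i) (e2-i) (t-1-j) (t-e1-j)"

lemma g_pascal: "g (t+1) e1 e2 i j = g t (e1-1) (e2-1) i j + g t e1 e2 i j + g t (e1-1) e2 i j + g t e1 (e2-1) i j"
proof -
  have "g (t+1) e1 e2 i j = G ((t-1-i)+1) (e2-i) ((t-1-j)+1) (t+1-e1-j)"
    unfolding g_def by (simp add: algebra_simps)
  also have "\<dots> = G (t-1-i) (e2-i-1) (t-1-j) (t+1-e1-j) + G (t-1-i) (e2-i) (t-1-j) (t+1-e1-j-1)
     + G (t-1-i) (e2-i) (t-1-j) (t+1-e1-j) + G (t-1-i) (e2-i-1) (t-1-j) (t+1-e1-j-1)"
    by (rule G_pascal)
  also have "\<dots> = g t (e1-1) (e2-1) i j + g t e1 e2 i j + g t (e1-1) e2 i j + g t e1 (e2-1) i j"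
    unfolding g_def by (simp add: algebra_simps)
  finally show ?thesis .
qed

lemma g_contact: "g (t+1) e e i (j+1) + g (t+1) e e (i+1) j
   = g t (e-1) (e-1) i j + g t e e i j + 2 * g t e (e-1) i j"
proof -
  have "g (t+1) e e i (j+1) + g (t+1) e e (i+1) j - g (t+1) e e i j
     = G ((t-1-i)+1) (e-i) (t-1-j) (t-e-j) + G (t-1-i) (e-i-1) ((t-1-j)+1) ((t-e-j)+1)
       - G ((t-1-i)+1) (e-i) ((t-1-j)+1) ((t-e-j)+1)"
    unfolding g_def by (simp add: algebra_simps)
  also have "\<dots> = G (t-1-i) (e-i-1) (t-1-j) (t-e-j) - G (t-1-i) (e-i) (t-1-j) ((t-e-j)+1)"
    by (rule G_contact)
  also have "\<dots> = g t e (e-1) i j - g t (e-1) e i j"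
    unfolding g_def by (simp add: algebra_simps)
  finally have "g (t+1) e e i (j+1) + g (t+1) e e (i+1) j - g (t+1) e e i j = g t e (e-1) i j - g t (e-1) e i j" .
  with g_pascal[of t e e i j] show ?thesis by simp
qed

definition f :: "int \<Rightarrow> int \<Rightarrow> int \<Rightarrow> nat \<Rightarrow> real" where
  "f t e1 e2 c = (\<Sum>i\<le>c. real (c choose i) * g t e1 e2 (int i) (int (c - i)))"

lemma f_pascal: "f (t+1) e1 e2 c = f t (e1-1) (e2-1) c + f t e1 e2 c + f t (e1-1) e2 c + f t e1 (e2-1) c"
  unfolding f_def g_pascal by (simp add: sum.distrib algebra_simps)

lemma binom_sum_Suc:
  fixes h :: "nat \<Rightarrow> real"
  shows "(\<Sum>i\<le>Suc c. real (Suc c choose i) * h i) = (\<Sum>i\<le>c. real (c choose i) * (h i + h (Suc i)))"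
proof -
  have "(\<Sum>i\<le>Suc c. real (Suc c choose i) * h i) = h 0 + (\<Sum>i\<le>c. real (Suc c choose Suc i) * h (Suc i))"
    by (simp only: sum.atMost_Suc_shift) simp
  also have "\<dots> = h 0 + (\<Sum>i\<le>c. real (c choose i) * h (Suc i)) + (\<Sum>i\<le>c. real (c choose Suc i) * h (Suc i))"
    by (simp add: sum.distrib algebra_simps)
  also have "(\<Sum>i\<le>c. real (c choose Suc i) * h (Suc i)) = (\<Sum>i\<le>Suc c. real (c choose i) * h i) - h 0"
    by (simp only: sum.atMost_Suc_shift) simp
  also have "(\<Sum>i\<le>Suc c. real (c choose i) * h i) = (\<Sum>i\<le>c. real (c choose i) * h i)"
    by simp
  finally show ?thesis by (simp add: sum.distrib algebra_simps)
qed

lemma f_contact: "f (t+1) e e (Suc c) = f t (e-1) (e-1) c + f t e e c + 2 * f t e (e-1) c"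
proof -
  have "f (t+1) e e (Suc c) = (\<Sum>i\<le>c. real (c choose i) *
      (g (t+1) e e (int i) (int (Suc c - i)) + g (t+1) e e (int (Suc i)) (int (Suc c - Suc i))))"
    unfolding f_def by (rule binom_sum_Suc)
  also have "\<dots> = (\<Sum>i\<le>c. real (c choose i) *
      (g t (e-1) (e-1) (int i) (int (c-i)) + g t e e (int i) (int (c-i)) + 2 * g t e (e-1) (int i) (int (c-i))))"
  proof (rule sum.cong[OF refl])
    fix i assume "i \<in> {..c}"
    then have h1: "int (Suc c - i) = int (c-i) + 1" and h2: "int (Suc i) = int i + 1" and h3: "Suc c - Suc i = c - i" by auto
    show "real (c choose i) * (g (t+1) e e (int i) (int (Suc c - i)) + g (t+1) e e (int (Suc i)) (int (Suc c - Suc i)))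
      = real (c choose i) * (g t (e-1) (e-1) (int i) (int (c-i)) + g t e e (int i) (int (c-i)) + 2 * g t e (e-1) (int i) (int (c-i)))"
      unfolding h3 h1 h2 using g_contact[of t e "int i" "int (c-i)"] by simp
  qed
  also have "\<dots> = f t (e-1) (e-1) c + f t e e c + 2 * f t e (e-1) c"
    unfolding f_def by (simp add: sum.distrib sum_distrib_left algebra_simps)
  finally show ?thesis .
qed

lemma f_zero: "f (int t + 1) e e 0 = 0"
proof -
  have "f (int t + 1) e e 0 = Bn (int t) (e) * Bn (int t) (int t + 1 - e) - Bn (int t) (e-1) * Bn (int t) (int t - e)"
    by (simp add: f_def g_def G_def algebra_simps)
  also have "Bn (int t) (int t + 1 - e) = Bn (int t) (e - 1)" using Bn_sym[of t "int t + 1 - e"] by simp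
  also have "Bn (int t) (int t - e) = Bn (int t) e" using Bn_sym[of t "int t - e"] by simp
  finally show ?thesis by simp
qed

lemma g_base: assumes "e2 \<le> e1" shows "g 0 e1 e2 (int i) (int j) = (if e1 = 0 \<and> e2 = 0 \<and> i = 0 \<and> j = 0 then 1 else 0)"
proof (cases "e2 < 0")
  case True
  then show ?thesis by (simp add: g_def G_def Bn_def)
next
  case False
  then have "e1 \<ge> 0" using assms by simp
  then have "g 0 e1 e2 (int i) (int j) = Bn (-1 - int i) (e2 - int i) * Bn (-1 - int j) (-e1 - int j)"
    by (simp add: g_def G_def Bn_def)
  then show ?thesis using \<open>e1 \<ge> 0\<close> False assms by (auto simp: Bn_def)
qed

lemma f_base: assumes "e2 \<le> e1" shows "f 0 e1 e2 c = (if e1 = 0 \<and> e2 = 0 \<and> c = 0 then 1 else 0)"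
proof -
  have "f 0 e1 e2 c = (\<Sum>i\<le>c. (if e1 = 0 \<and> e2 = 0 \<and> c = 0 \<and> i = 0 then 1 else 0))"
    unfolding f_def
  proof (rule sum.cong[OF refl])
    fix x assume "x \<in> {..c}"
    then show "real (c choose x) * g 0 e1 e2 (int x) (int (c - x)) = (if e1 = 0 \<and> e2 = 0 \<and> c = 0 \<and> x = 0 then 1 else 0)"
      using g_base[OF assms, of x "c-x"] by auto
  qed
  then show ?thesis by (cases "e1 = 0 \<and> e2 = 0 \<and> c = 0") auto
qed



definition ee1 :: "(bool \<times> bool) list \<Rightarrow> nat" where "ee1 w = length (filter id (map fst w))"
definition ee2 :: "(bool \<times> bool) list \<Rightarrow> nat" where "ee2 w = length (filter id (map snd w))"
definition cnum :: "(bool \<times> bool) list \<Rightarrow> nat" where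
  "cnum w = card {i. 1 \<le> i \<and> i \<le> length w \<and> ee1 (take i w) = ee2 (take i w)}"
definition PS :: "nat \<Rightarrow> int \<Rightarrow> int \<Rightarrow> nat \<Rightarrow> (bool \<times> bool) list set" where
  "PS t a b c = {w. length w = t \<and> int (ee1 w) = a \<and> int (ee2 w) = b \<and> cnum w = c}"

lemma ee1_snoc: "ee1 (w@[x]) = ee1 w + (if fst x then 1 else 0)" by (simp add: ee1_def)
lemma ee2_snoc: "ee2 (w@[x]) = ee2 w + (if snd x then 1 else 0)" by (simp add: ee2_def)

lemma cnum_snoc: "cnum (w@[x]) = cnum w + (if ee1 (w@[x]) = ee2 (w@[x]) then 1 else 0)"
proof -
  let ?A = "{i. 1 \<le> i \<and> i \<le> length w \<and> ee1 (take i w) = ee2 (take i w)}"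
  have eq: "{i. 1 \<le> i \<and> i \<le> length (w@[x]) \<and> ee1 (take i (w@[x])) = ee2 (take i (w@[x]))}
     = ?A \<union> (if ee1 (w@[x]) = ee2 (w@[x]) then {Suc (length w)} else {})"
  proof -
    have "\<And>i. i \<le> length w \<Longrightarrow> take i (w@[x]) = take i w" by simp
    moreover have "take (Suc (length w)) (w@[x]) = w@[x]" by simp
    ultimately show ?thesis by (auto simp: le_Suc_eq)
  qed
  have fin: "finite ?A" by (rule finite_subset[of _ "{..length w}"]) auto
  show ?thesis unfolding cnum_def eq using fin by (simp add: card_insert_if)
qed

lemma cnum_Nil: "cnum [] = 0"
proof -
  have "{i. 1 \<le> i \<and> i \<le> length ([]::(bool\<times>bool) list) \<and> ee1 (take i []) = ee2 (take i [])} = {}" by auto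
  then show ?thesis unfolding cnum_def by (simp only:) simp
qed

lemma finite_PS: "finite (PS t a b c)"
proof -
  have "PS t a b c \<subseteq> {w. set w \<subseteq> UNIV \<and> length w = t}" by (auto simp: PS_def)
  moreover have "finite {w::(bool\<times>bool) list. set w \<subseteq> UNIV \<and> length w = t}"
    by (rule finite_lists_length_eq) simp
  ultimately show ?thesis by (rule finite_subset)
qed

lemma card_snoc:
  fixes X :: "('a::finite) list set"
  assumes "finite X" "\<forall>w\<in>X. w \<noteq> []"
  shows "card X = (\<Sum>x\<in>UNIV. card {v. v@[x] \<in> X})"
proof -
  have X: "X = (\<Union>x\<in>UNIV. (\<lambda>v. v@[x]) ` {v. v@[x] \<in> X})"
  proof
    show "X \<subseteq> (\<Union>x\<in>UNIV. (\<lambda>v. v@[x]) ` {v. v@[x] \<in> X})"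
    proof
      fix w assume w: "w \<in> X"
      then have "w = butlast w @ [last w]" using assms(2) by simp
      then show "w \<in> (\<Union>x\<in>UNIV. (\<lambda>v. v@[x]) ` {v. v@[x] \<in> X})" using w
        by (metis (mono_tags, lifting) UNIV_I UN_iff image_eqI mem_Collect_eq)
    qed
  qed auto
  have fin: "\<And>x. finite {v. v@[x] \<in> X}"
  proof -
    fix x
    have "{v. v@[x] \<in> X} = (\<lambda>v. v@[x]) -` X" by auto
    then show "finite {v. v@[x] \<in> X}" using finite_vimageI[OF assms(1), of "\<lambda>v. v@[x]"]
      by (simp add: inj_def)
  qed
  have "card X = (\<Sum>x\<in>UNIV. card ((\<lambda>v. v@[x]) ` {v. v@[x] \<in> X}))"
    by (subst X, rule card_UN_disjoint) (auto simp: fin)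
  also have "\<dots> = (\<Sum>x\<in>UNIV. card {v. v@[x] \<in> X})"
    by (intro sum.cong refl card_image) (simp add: inj_on_def)
  finally show ?thesis .
qed

lemma sum_UNIV_bb: "(\<Sum>x\<in>(UNIV::(bool\<times>bool) set). h x) = h (True,True) + h (True,False) + h (False,True) + h (False,False)"
proof -
  have U: "(UNIV::(bool\<times>bool) set) = {(True,True),(True,False),(False,True),(False,False)}"
  proof (intro set_eqI iffI)
    fix x :: "bool \<times> bool"
    obtain p q where "x = (p,q)" by (cases x)
    then show "x \<in> {(True,True),(True,False),(False,True),(False,False)}" by (cases p; cases q) auto
  qed simp
  show ?thesis unfolding U by (simp add: add.assoc)
qed

lemma PS_snoc: "{v. v@[x] \<in> PS (Suc t) a b c} =
   (if a = b \<and> c = 0 then {} else PS t (a - (if fst x then 1 else 0)) (b - (if snd x then 1 else 0)) (if a = b then c - 1 else c))"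
proof -
  define d1 :: int where "d1 = (if fst x then 1 else 0)"
  define d2 :: int where "d2 = (if snd x then 1 else 0)"
  have m: "v@[x] \<in> PS (Suc t) a b c \<longleftrightarrow> (\<not> (a = b \<and> c = 0) \<and> v \<in> PS t (a - d1) (b - d2) (if a = b then c - 1 else c))" for v
  proof -
    have A: "int (ee1 (v@[x])) = int (ee1 v) + d1" by (simp add: ee1_snoc d1_def)
    have B: "int (ee2 (v@[x])) = int (ee2 v) + d2" by (simp add: ee2_snoc d2_def)
    have C: "cnum (v@[x]) = cnum v + (if int (ee1 (v@[x])) = int (ee2 (v@[x])) then 1 else 0)"
      by (simp add: cnum_snoc)
    have "v@[x] \<in> PS (Suc t) a b c \<longleftrightarrow> length v = t \<and> int (ee1 v) + d1 = a \<and> int (ee2 v) + d2 = b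
       \<and> cnum v + (if int (ee1 v) + d1 = int (ee2 v) + d2 then 1 else 0) = c"
      unfolding PS_def mem_Collect_eq A B C by simp
    also have "\<dots> \<longleftrightarrow> length v = t \<and> int (ee1 v) = a - d1 \<and> int (ee2 v) = b - d2
       \<and> cnum v + (if a = b then 1 else 0) = c"
      by (cases "a = b") auto
    also have "\<dots> \<longleftrightarrow> (\<not> (a = b \<and> c = 0) \<and> v \<in> PS t (a - d1) (b - d2) (if a = b then c - 1 else c))"
      unfolding PS_def by (cases "a = b") auto
    finally show ?thesis .
  qed
  show ?thesis unfolding d1_def[symmetric] d2_def[symmetric] using m by auto
qed

lemma PS_sym: "card (PS t a b c) = card (PS t b a c)"
proof -
  have i: "inj (map prod.swap)" by (simp add: inj_on_def)
  have e: "ee1 (map prod.swap w) = ee2 w" "ee2 (map prod.swap w) = ee1 w" for w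
    by (simp_all add: ee1_def ee2_def comp_def)
  have c: "cnum (map prod.swap w) = cnum w" for w
    unfolding cnum_def by (rule arg_cong[where f=card]) (auto simp: e take_map)
  have "PS t b a c = map prod.swap ` PS t a b c"
  proof
    show "map prod.swap ` PS t a b c \<subseteq> PS t b a c" by (auto simp: PS_def e c)
    show "PS t b a c \<subseteq> map prod.swap ` PS t a b c"
    proof
      fix w assume "w \<in> PS t b a c"
      then have "map prod.swap w \<in> PS t a b c" by (auto simp: PS_def e c)
      moreover have "w = map prod.swap (map prod.swap w)" by (simp add: map_idI)
      ultimately show "w \<in> map prod.swap ` PS t a b c" by blast
    qed
  qed
  moreover have "inj_on (map prod.swap) (PS t a b c)" using i by (rule inj_on_subset) simp
  ultimately show ?thesis using card_image[of "map prod.swap" "PS t a b c"] by simp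
qed

lemma PS_formula: "b \<le> a \<Longrightarrow> real (card (PS t a b c)) = f (int t) a b c"
proof (induction t arbitrary: a b c)
  case 0
  have "PS 0 a b c = (if a = 0 \<and> b = 0 \<and> c = 0 then {[]} else {})"
    by (auto simp: PS_def ee1_def ee2_def cnum_Nil)
  then show ?case using f_base[OF 0(1)] by simp
next
  case (Suc t)
  have nn: "\<forall>w\<in>PS (Suc t) a b c. w \<noteq> []" by (auto simp: PS_def)
  have cs: "card (PS (Suc t) a b c) = (\<Sum>x\<in>UNIV. card {v. v@[x] \<in> PS (Suc t) a b c})"
    by (rule card_snoc[OF finite_PS nn])
  have it: "int (Suc t) = int t + 1" by simp
  consider "a \<noteq> b" | "a = b" "c = 0" | c' where "a = b" "c = Suc c'" by (cases c) auto
  then show ?case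
  proof cases
    case 1
    then have "card (PS (Suc t) a b c) = card (PS t (a-1) (b-1) c) + card (PS t (a-1) b c) + card (PS t a (b-1) c) + card (PS t a b c)"
      using cs by (simp add: PS_snoc sum_UNIV_bb)
    moreover have "real (card (PS t (a-1) (b-1) c)) = f (int t) (a-1) (b-1) c" by (rule Suc.IH) (use Suc.prems in simp)
    moreover have "real (card (PS t (a-1) b c)) = f (int t) (a-1) b c" by (rule Suc.IH) (use Suc.prems 1 in simp)
    moreover have "real (card (PS t a (b-1) c)) = f (int t) a (b-1) c" by (rule Suc.IH) (use Suc.prems in simp)
    moreover have "real (card (PS t a b c)) = f (int t) a b c" by (rule Suc.IH) (use Suc.prems in simp)
    ultimately have "real (card (PS (Suc t) a b c)) = f (int t) (a-1) (b-1) c + f (int t) (a-1) b c + f (int t) a (b-1) c + f (int t) a b c"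
      by simp
    then show ?thesis unfolding it f_pascal by simp
  next
    case 2
    then have "card (PS (Suc t) a b c) = 0" using cs by (simp add: PS_snoc)
    then show ?thesis unfolding it using f_zero[of t a] 2 by simp
  next
    case 3
    then have "card (PS (Suc t) a b c) = card (PS t (a-1) (a-1) c') + card (PS t (a-1) a c') + card (PS t a (a-1) c') + card (PS t a a c')"
      using cs by (simp add: PS_snoc sum_UNIV_bb)
    also have "card (PS t (a-1) a c') = card (PS t a (a-1) c')" by (rule PS_sym)
    finally have e: "card (PS (Suc t) a b c) = card (PS t (a-1) (a-1) c') + card (PS t a (a-1) c') + card (PS t a (a-1) c') + card (PS t a a c')" .
    have "real (card (PS t (a-1) (a-1) c')) = f (int t) (a-1) (a-1) c'" by (rule Suc.IH) simp
    moreover have "real (card (PS t a (a-1) c')) = f (int t) a (a-1) c'" by (rule Suc.IH) simp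
    moreover have "real (card (PS t a a c')) = f (int t) a a c'" by (rule Suc.IH) simp
    ultimately have "real (card (PS (Suc t) a b c)) = f (int t) (a-1) (a-1) c' + f (int t) a a c' + 2 * f (int t) a (a-1) c'"
      using e by simp
    then show ?thesis unfolding it 3 f_contact by simp
  qed
qed



lemma filt_len: "length (filter id xs) + length (filter Not xs) = length xs"
  by (induction xs) auto

lemma pv_sum: "i \<le> length P \<Longrightarrow> fst (path_vertex P i) + snd (path_vertex P i) = i"
  unfolding path_vertex_def using filt_len[of "take i P"] by simp

lemma vert_card:
  assumes lP: "length P = n" and lQ: "length Q = n" and cP: "length (filter id P) = r"
    and cQ: "length (filter id Q) = r" and n1: "n \<ge> 1"
  shows "card (path_vertices P \<inter> path_vertices Q - {(0,0),(r,n-r)}) + 1 = cnum (zip P Q)"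
proof -
  define E where "E i \<longleftrightarrow> length (filter id (take i P)) = length (filter id (take i Q))" for i
  have rn: "r \<le> n" using cP lP by (metis length_filter_le)
  have c1: "cnum (zip P Q) = card {i. 1 \<le> i \<and> i \<le> n \<and> E i}"
  proof -
    have "ee1 (take i (zip P Q)) = length (filter id (take i P))" for i
      unfolding ee1_def take_zip using lP lQ by simp
    moreover have "ee2 (take i (zip P Q)) = length (filter id (take i Q))" for i
      unfolding ee2_def take_zip using lP lQ by simp
    ultimately show ?thesis unfolding cnum_def E_def using lP lQ by simp
  qed
  have En: "E n" unfolding E_def using lP lQ cP cQ by simp
  have c2: "{i. 1 \<le> i \<and> i \<le> n \<and> E i} = insert n {i. 1 \<le> i \<and> i < n \<and> E i}"
    using En n1 by auto
  have fin: "finite {i. 1 \<le> i \<and> i < n \<and> E i}" by (rule finite_subset[of _ "{..<n}"]) auto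
  have c3: "card {i. 1 \<le> i \<and> i \<le> n \<and> E i} = card {i. 1 \<le> i \<and> i < n \<and> E i} + 1"
    unfolding c2 using fin by simp
  have pvE: "path_vertex P i = path_vertex Q i \<longleftrightarrow> E i" if "i \<le> n" for i
  proof
    assume "path_vertex P i = path_vertex Q i"
    then show "E i" unfolding E_def path_vertex_def by simp
  next
    assume "E i"
    moreover have "fst (path_vertex P i) + snd (path_vertex P i) = i" using pv_sum lP that by simp
    moreover have "fst (path_vertex Q i) + snd (path_vertex Q i) = i" using pv_sum lQ that by simp
    ultimately show "path_vertex P i = path_vertex Q i" unfolding E_def
      by (metis add_left_cancel fst_conv path_vertex_def prod_eqI)
  qed
  have pv0: "path_vertex P 0 = (0,0)" by (simp add: path_vertex_def)
  have S: "path_vertices P \<inter> path_vertices Q - {(0,0),(r,n-r)} = path_vertex P ` {i. 1 \<le> i \<and> i < n \<and> E i}"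
  proof (intro equalityI subsetI)
    fix x assume x: "x \<in> path_vertices P \<inter> path_vertices Q - {(0,0),(r,n-r)}"
    then have xP: "x \<in> path_vertices P" and xQ: "x \<in> path_vertices Q" by auto
    from xP obtain i where i: "x = path_vertex P i" "i \<le> n"
      unfolding path_vertices_def using lP by auto
    from xQ obtain j where j: "x = path_vertex Q j" "j \<le> n"
      unfolding path_vertices_def using lQ by auto
    have "i = fst x + snd x" using pv_sum[of i P] i lP by simp
    moreover have "j = fst x + snd x" using pv_sum[of j Q] j lQ by simp
    ultimately have ij: "i = j" by simp
    then have "path_vertex P i = path_vertex Q i" using i j by simp
    then have "E i" using pvE i(2) by blast
    moreover have "i \<noteq> 0"
    proof
      assume "i = 0"
      then have "x = (0,0)" using i pv0 by simp
      then show False using x by simp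
    qed
    moreover have "i \<noteq> n"
    proof
      assume "i = n"
      then have "x = (r, n - r)" using i lP cP filt_len[of P] unfolding path_vertex_def by simp
      then show False using x by simp
    qed
    ultimately show "x \<in> path_vertex P ` {i. 1 \<le> i \<and> i < n \<and> E i}" using i by auto
  next
    fix x assume "x \<in> path_vertex P ` {i. 1 \<le> i \<and> i < n \<and> E i}"
    then obtain i where i: "x = path_vertex P i" "1 \<le> i" "i < n" "E i" by auto
    have s: "fst x + snd x = i" using pv_sum[of i P] i lP by simp
    have "x \<in> path_vertices P" unfolding path_vertices_def using i lP by auto
    moreover have "x \<in> path_vertices Q" unfolding path_vertices_def using i lQ pvE[of i] by auto
    moreover have "x \<noteq> (0,0)" using s i by auto
    moreover have "x \<noteq> (r, n-r)" using s i rn by auto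
    ultimately show "x \<in> path_vertices P \<inter> path_vertices Q - {(0,0),(r,n-r)}" by simp
  qed
  have inj: "inj_on (path_vertex P) {i. 1 \<le> i \<and> i < n \<and> E i}"
  proof (rule inj_onI)
    fix i j assume a: "i \<in> {i. 1 \<le> i \<and> i < n \<and> E i}" "j \<in> {i. 1 \<le> i \<and> i < n \<and> E i}" and e: "path_vertex P i = path_vertex P j"
    have "i \<le> length P" "j \<le> length P" using a lP by auto
    then have "fst (path_vertex P i) + snd (path_vertex P i) = i" "fst (path_vertex P j) + snd (path_vertex P j) = j"
      using pv_sum by blast+
    then show "i = j" using e by metis
  qed
  show ?thesis unfolding S card_image[OF inj] c1 c3 ..
qed

lemma N_count_PS:
  assumes n1: "n \<ge> 1"
  shows "N_count k n r = card (PS n (int r) (int r) (Suc k))"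
proof -
  define X where "X = {(P, Q). P \<in> lattice_paths n r \<and> Q \<in> lattice_paths n r \<and>
      card (path_vertices P \<inter> path_vertices Q - {(0, 0), (r, n - r)}) = k}"
  have inj: "inj_on (\<lambda>(P,Q). zip P Q) X"
  proof (rule inj_onI)
    fix x y assume "x \<in> X" "y \<in> X" "(\<lambda>(P,Q). zip P Q) x = (\<lambda>(P,Q). zip P Q) y"
    then show "x = y" unfolding X_def lattice_paths_def
      by (auto simp: zip_eq_conv)
  qed
  have img: "(\<lambda>(P,Q). zip P Q) ` X = PS n (int r) (int r) (Suc k)"
  proof (intro equalityI subsetI)
    fix w assume "w \<in> (\<lambda>(P,Q). zip P Q) ` X"
    then obtain P Q where w: "w = zip P Q" and PQ: "(P,Q) \<in> X" by auto
    then have l: "length P = n" "length Q = n" "length (filter id P) = r" "length (filter id Q) = r"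
      and c: "card (path_vertices P \<inter> path_vertices Q - {(0, 0), (r, n - r)}) = k"
      unfolding X_def lattice_paths_def by auto
    have "cnum w = Suc k" using vert_card[OF l n1] c w by simp
    moreover have "ee1 w = r" "ee2 w = r" "length w = n" unfolding w ee1_def ee2_def using l by simp_all
    ultimately show "w \<in> PS n (int r) (int r) (Suc k)" unfolding PS_def by simp
  next
    fix w assume "w \<in> PS n (int r) (int r) (Suc k)"
    then have w: "length w = n" "ee1 w = r" "ee2 w = r" "cnum w = Suc k" unfolding PS_def by auto
    define P where "P = map fst w"
    define Q where "Q = map snd w"
    have z: "zip P Q = w" unfolding P_def Q_def by (simp add: zip_map_fst_snd)
    have l: "length P = n" "length Q = n" "length (filter id P) = r" "length (filter id Q) = r"
      using w unfolding P_def Q_def ee1_def ee2_def by simp_all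
    have "card (path_vertices P \<inter> path_vertices Q - {(0, 0), (r, n - r)}) = k"
      using vert_card[OF l n1] z w by simp
    then have "(P,Q) \<in> X" unfolding X_def lattice_paths_def using l by simp
    then show "w \<in> (\<lambda>(P,Q). zip P Q) ` X" using z by force
  qed
  have "N_count k n r = card X" unfolding N_count_def X_def ..
  also have "\<dots> = card ((\<lambda>(P,Q). zip P Q) ` X)" using card_image[OF inj] by simp
  finally show ?thesis unfolding img .
qed

lemma key_alg:
  fixes P Q U V s r \<alpha> \<beta> :: real
  assumes h1: "s*U = \<alpha>*P" and h2: "r*V = \<beta>*Q"
  shows "(\<alpha>+\<beta>)*(P*Q - U*V) = (s-\<beta>)*U*(V+Q) + (r-\<alpha>)*V*(U+P)"
proof -
  have "(s-\<beta>)*U*(V+Q) + (r-\<alpha>)*V*(U+P) = (s*U)*V + (s*U)*Q - \<beta>*U*V - \<beta>*U*Q + (r*V)*U + (r*V)*P - \<alpha>*U*V - \<alpha>*P*V"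
    by (simp add: algebra_simps)
  also have "\<dots> = (\<alpha>*P)*V + (\<alpha>*P)*Q - \<beta>*U*V - \<beta>*U*Q + (\<beta>*Q)*U + (\<beta>*Q)*P - \<alpha>*U*V - \<alpha>*P*V"
    by (simp only: h1 h2)
  also have "\<dots> = (\<alpha>+\<beta>)*(P*Q - U*V)" by (simp add: algebra_simps)
  finally show ?thesis ..
qed

lemma per_i:
  assumes n2: "n \<ge> 2" and rn: "r \<le> n" and kn: "k \<le> n - 2" and ik: "i \<le> Suc k"
  defines "T \<equiv> (\<lambda>i. real ((n - k + i - 1) choose r) * real ((n - i - 1) choose (n - r)))"
  shows "(real n - real k - 1) * (real (Suc k choose i) * g (int n) (int r) (int r) (int i) (int (Suc k - i)))
     = (real k + 1) * real (k choose i) * T i + (if i = 0 then 0 else (real k + 1) * real (k choose (i-1)) * T (i-1))"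
proof -
  define j where "j = Suc k - i"
  define a where "a = n - 1 - i"
  define b where "b = n - 1 - j"
  define s where "s = n - r"
  have ia: "int a = int n - 1 - int i" using ik kn n2 unfolding a_def by simp
  have ib: "int b = int n - 1 - int j" using ik kn n2 unfolding b_def j_def by simp
  have ij: "int j = int k + 1 - int i" using ik unfolding j_def by simp
  have iss: "int s = int n - int r" using rn unfolding s_def by simp
  define P where "P = Bn (int a) (int s - 1)"
  define U where "U = Bn (int a) (int s)"
  define Q where "Q = Bn (int b) (int r - 1)"
  define V where "V = Bn (int b) (int r)"
  have gf: "g (int n) (int r) (int r) (int i) (int j) = Bn (int a) (int r - int i) * Bn (int b) (int n - int r - int j)
     - Bn (int a) (int r - int i - 1) * Bn (int b) (int n - int r - int j - 1)"
    unfolding g_def G_def ia ib by (simp add: algebra_simps)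
  have h1: "Bn (int a) (int r - int i) = P"
  proof -
    have e: "int a - (int r - int i) = int s - 1" using ia iss by simp
    have "Bn (int a) (int r - int i) = Bn (int a) (int a - (int r - int i))" by (rule Bn_sym)
    also have "\<dots> = P" unfolding e P_def ..
    finally show ?thesis .
  qed
  have h2: "Bn (int a) (int r - int i - 1) = U"
  proof -
    have e: "int a - (int r - int i - 1) = int s" using ia iss by simp
    have "Bn (int a) (int r - int i - 1) = Bn (int a) (int a - (int r - int i - 1))" by (rule Bn_sym)
    also have "\<dots> = U" unfolding e U_def ..
    finally show ?thesis .
  qed
  have h3: "Bn (int b) (int n - int r - int j) = Q"
  proof -
    have e: "int b - (int n - int r - int j) = int r - 1" using ib by simp
    have "Bn (int b) (int n - int r - int j) = Bn (int b) (int b - (int n - int r - int j))" by (rule Bn_sym)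
    also have "\<dots> = Q" unfolding e Q_def ..
    finally show ?thesis .
  qed
  have h4: "Bn (int b) (int n - int r - int j - 1) = V"
  proof -
    have e: "int b - (int n - int r - int j - 1) = int r" using ib by simp
    have "Bn (int b) (int n - int r - int j - 1) = Bn (int b) (int b - (int n - int r - int j - 1))" by (rule Bn_sym)
    also have "\<dots> = V" unfolding e V_def ..
    finally show ?thesis .
  qed
  have g: "g (int n) (int r) (int r) (int i) (int j) = P*Q - U*V" using gf h1 h2 h3 h4 by simp
  have Ti: "T i = U * (V + Q)"
  proof -
    have "n - k + i - 1 = b + 1" using ik kn n2 unfolding b_def j_def by simp
    then have "real ((n - k + i - 1) choose r) = Bn (int b + 1) (int r)" using Bn_nat[of "b+1" r] by (simp add: add.commute)
    also have "\<dots> = V + Q" unfolding V_def Q_def by (rule Bn_pascal)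
    finally have 1: "real ((n - k + i - 1) choose r) = V + Q" .
    have "real ((n - i - 1) choose (n - r)) = U" unfolding U_def s_def a_def using Bn_nat by simp
    then show ?thesis using 1 unfolding T_def by simp
  qed
  have Ti1: "i \<ge> 1 \<Longrightarrow> T (i-1) = V * (U + P)"
  proof -
    assume i1: "i \<ge> 1"
    have "n - k + (i - 1) - 1 = b" using ik kn n2 i1 unfolding b_def j_def by simp
    then have 1: "real ((n - k + (i - 1) - 1) choose r) = V" unfolding V_def using Bn_nat by simp
    have "n - (i - 1) - 1 = a + 1" using ik kn n2 i1 unfolding a_def by simp
    then have "real ((n - (i - 1) - 1) choose (n - r)) = Bn (int a + 1) (int s)" using Bn_nat[of "a+1" s] unfolding s_def by (simp add: add.commute)
    also have "\<dots> = U + P" unfolding U_def P_def by (rule Bn_pascal)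
    finally show ?thesis using 1 unfolding T_def by simp
  qed
  have ra: "real a = real n - 1 - real i" using ik kn n2 unfolding a_def by (simp add: of_nat_diff)
  have rb: "real b = real n - 1 - real j" using ik kn n2 unfolding b_def j_def by (simp add: of_nat_diff)
  have rs: "real s = real n - real r" using rn unfolding s_def by (simp add: of_nat_diff)
  have "U * real s = P * (real a - real s + 1)"
    using Bn_absorb[of "int a" "int s"] unfolding U_def P_def by simp
  moreover have "real a - real s + 1 = real r - real i" using ra rs by simp
  ultimately have r1: "real s * U = (real r - real i) * P" by (metis mult.commute)
  have "V * real r = Q * (real b - real r + 1)"
    using Bn_absorb[of "int b" "int r"] unfolding V_def Q_def by simp
  moreover have "real b - real r + 1 = real s - real j" using rb rs by simp
  ultimately have r2: "real r * V = (real s - real j) * Q" by (metis mult.commute)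
  have N: "real n - real k - 1 = (real r - real i) + (real s - real j)"
    using ij iss by simp
  have K: "(real n - real k - 1) * (P*Q - U*V) = real j * (U*(V+Q)) + real i * (V*(U+P))"
  proof -
    have "(real n - real k - 1) * (P*Q - U*V) = (real s - (real s - real j))*U*(V+Q) + (real r - (real r - real i))*V*(U+P)"
      unfolding N by (rule key_alg[OF r1 r2])
    then show ?thesis by (simp add: algebra_simps)
  qed
  have b1: "(real k + 1) * real (k choose i) = real j * real (Suc k choose i)"
  proof -
    have "(Suc k - i) * (Suc k choose i) = Suc k * (k choose i)" using binomial_absorb_comp[of "Suc k" i] by simp
    then have "real (Suc k - i) * real (Suc k choose i) = real (Suc k) * real (k choose i)" by (metis of_nat_mult)
    then show ?thesis unfolding j_def by simp
  qed
  have b2: "i \<ge> 1 \<Longrightarrow> (real k + 1) * real (k choose (i-1)) = real i * real (Suc k choose i)"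
  proof -
    assume "i \<ge> 1"
    then obtain i' where i': "i = Suc i'" by (cases i) auto
    have "Suc i' * (Suc k choose Suc i') = Suc k * (k choose i')" using binomial_absorption[of i' "Suc k"] by simp
    then have "real (Suc i') * real (Suc k choose Suc i') = real (Suc k) * real (k choose i')" by (metis of_nat_mult)
    then show ?thesis unfolding i' by simp
  qed
  have "(real n - real k - 1) * (real (Suc k choose i) * g (int n) (int r) (int r) (int i) (int j))
      = real (Suc k choose i) * ((real n - real k - 1) * (P*Q - U*V))" using g by simp
  also have "\<dots> = (real j * real (Suc k choose i)) * (U*(V+Q)) + (real i * real (Suc k choose i)) * (V*(U+P))"
    unfolding K by (simp add: algebra_simps)
  also have "\<dots> = (real k + 1) * real (k choose i) * T i + (if i = 0 then 0 else (real k + 1) * real (k choose (i-1)) * T (i-1))"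
  proof (cases "i = 0")
    case True
    then show ?thesis using b1 Ti by simp
  next
    case False
    then have i1: "i \<ge> 1" by simp
    show ?thesis using False b1 b2[OF i1] Ti Ti1[OF i1] by simp
  qed
  finally show ?thesis unfolding j_def .
qed

theorem mainTheorem1:
  fixes n r k :: nat
  assumes "n \<ge> 2" and "r \<le> n" and "k \<le> n - 2"
  shows "real (N_count k n r) =
    (2 * (real k + 1) / (real n - real k - 1)) *
      (\<Sum>i = 0..k. real (k choose i) * real ((n - k + i - 1) choose r) * real ((n - i - 1) choose (n - r)))"
proof -
  have n1: "n \<ge> 1" using assms by simp
  have "real (N_count k n r) = real (card (PS n (int r) (int r) (Suc k)))" using N_count_PS[OF n1] by simp
  also have "\<dots> = f (int n) (int r) (int r) (Suc k)" by (rule PS_formula) simp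
  finally have A: "real (N_count k n r) = f (int n) (int r) (int r) (Suc k)" .
  define X where "X i = real (k choose i) * real ((n - k + i - 1) choose r) * real ((n - i - 1) choose (n - r))" for i
  define N where "N = real n - real k - 1"
  have Npos: "N > 0" unfolding N_def using assms by linarith
  have pi: "N * (real (Suc k choose i) * g (int n) (int r) (int r) (int i) (int (Suc k - i)))
      = (real k + 1) * X i + (if i = 0 then 0 else (real k + 1) * X (i-1))" if "i \<in> {..Suc k}" for i
    using per_i[OF assms, of i] that unfolding X_def N_def by (simp add: mult.assoc)
  have "N * f (int n) (int r) (int r) (Suc k) = (\<Sum>i\<le>Suc k. N * (real (Suc k choose i) * g (int n) (int r) (int r) (int i) (int (Suc k - i))))"
    unfolding f_def by (rule sum_distrib_left)
  also have "\<dots> = (\<Sum>i\<le>Suc k. (real k + 1) * X i + (if i = 0 then 0 else (real k + 1) * X (i-1)))"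
    by (rule sum.cong[OF refl]) (rule pi)
  also have "\<dots> = (\<Sum>i\<le>Suc k. (real k + 1) * X i) + (\<Sum>i\<le>Suc k. (if i = 0 then 0 else (real k + 1) * X (i-1)))"
    by (rule sum.distrib)
  also have "(\<Sum>i\<le>Suc k. (if i = 0 then 0 else (real k + 1) * X (i-1))) = (\<Sum>i\<le>k. (real k + 1) * X i)"
    by (simp only: sum.atMost_Suc_shift) simp
  also have "(\<Sum>i\<le>Suc k. (real k + 1) * X i) = (\<Sum>i\<le>k. (real k + 1) * X i)"
    by (simp add: X_def)
  finally have F: "N * f (int n) (int r) (int r) (Suc k) = (\<Sum>i\<le>k. (real k + 1) * X i) + (\<Sum>i\<le>k. (real k + 1) * X i)" .
  have "(\<Sum>i\<le>k. (real k + 1) * X i) = (real k + 1) * (\<Sum>i\<le>k. X i)" by (rule sum_distrib_left[symmetric])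
  then have "N * f (int n) (int r) (int r) (Suc k) = 2 * (real k + 1) * (\<Sum>i\<le>k. X i)"
    using F by simp
  then have "f (int n) (int r) (int r) (Suc k) = 2 * (real k + 1) / N * (\<Sum>i\<le>k. X i)"
    using Npos by (simp add: field_simps)
  moreover have "(\<Sum>i\<le>k. X i) = (\<Sum>i = 0..k. real (k choose i) * real ((n - k + i - 1) choose r) * real ((n - i - 1) choose (n - r)))"
    unfolding X_def by (simp add: atLeast0AtMost)
  ultimately show ?thesis using A unfolding N_def by simp
qed

end
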